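(* Let $\mathbf{b}\in H_{1,2,2}$ have odd norm. Then there exist units $\mathbf{u},\mathbf{u}_1$ of $H_{1,2,2}$ such that $\mathbf{b}\mathbf{u}\equiv\mathbf{u}_1\mathbf{b}\equiv 1 \pmod 2$, i.e. $\mathbf{b}\mathbf{u}-1\in 2H_{1,2,2}$ and $\mathbf{u}_1\mathbf{b}-1\in 2H_{1,2,2}$.
   Context: Let $\mathbf{i},\mathbf{j},\mathbf{k}$ be the standard quaternion units; $\overline{\mathbf{q}}$ is quaternion conjugation and $N(\mathbf{q})=\mathbf{q}\overline{\mathbf{q}}$. $H_{1,2,2}$ is the subring of the quaternions equal to the $\mathbb{Z}$-module generated by $\mathbf{v}_1=1$, $\mathbf{v}_2=\mathbf{i}$, $\mathbf{v}_3=\tfrac12(1+\mathbf{i}+\sqrt2\,\mathbf{j})$, $\mathbf{v}_4=\tfrac12(1+\mathbf{i}+\sqrt2\,\mathbf{k})$. A unit is an element invertible in $H_{1,2,2}$ (equivalently of norm 1). *)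

theory Defs
  imports Complex_Main
begin

datatype quat = Quat (qre: real) (qi: real) (qj: real) (qk: real)

definition qadd :: "quat \<Rightarrow> quat \<Rightarrow> quat" where
  "qadd p q = Quat (qre p + qre q) (qi p + qi q) (qj p + qj q) (qk p + qk q)"

definition qsub :: "quat \<Rightarrow> quat \<Rightarrow> quat" where
  "qsub p q = Quat (qre p - qre q) (qi p - qi q) (qj p - qj q) (qk p - qk q)"

definition qscale :: "real \<Rightarrow> quat \<Rightarrow> quat" where
  "qscale r q = Quat (r * qre q) (r * qi q) (r * qj q) (r * qk q)"

definition qmul :: "quat \<Rightarrow> quat \<Rightarrow> quat" where
  "qmul p q = Quat
     (qre p * qre q - qi p * qi q - qj p * qj q - qk p * qk q)
     (qre p * qi q + qi p * qre q + qj p * qk q - qk p * qj q)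
     (qre p * qj q - qi p * qk q + qj p * qre q + qk p * qi q)
     (qre p * qk q + qi p * qj q - qj p * qi q + qk p * qre q)"

definition qone :: quat where "qone = Quat 1 0 0 0"

definition qconj :: "quat \<Rightarrow> quat" where
  "qconj q = Quat (qre q) (- qi q) (- qj q) (- qk q)"

definition qnorm :: "quat \<Rightarrow> real" where
  "qnorm q = qre (qmul q (qconj q))"

definition v1 :: quat where "v1 = Quat 1 0 0 0"
definition v2 :: quat where "v2 = Quat 0 1 0 0"
definition v3 :: quat where "v3 = Quat (1/2) (1/2) (sqrt 2 / 2) 0"
definition v4 :: quat where "v4 = Quat (1/2) (1/2) 0 (sqrt 2 / 2)"

definition H122 :: "quat set" where
  "H122 = {qadd (qadd (qscale (of_int a) v1) (qscale (of_int b) v2))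
                (qadd (qscale (of_int c) v3) (qscale (of_int d) v4)) | a b c d :: int. True}"

definition is_unit_H122 :: "quat \<Rightarrow> bool" where
  "is_unit_H122 u \<longleftrightarrow> u \<in> H122 \<and> (\<exists>w\<in>H122. qmul u w = qone \<and> qmul w u = qone)"

definition cong2_H122 :: "quat \<Rightarrow> quat \<Rightarrow> bool" where
  "cong2_H122 x y \<longleftrightarrow> (\<exists>z\<in>H122. qsub x y = qscale 2 z)"

end

theory Submission
  imports Defs
begin

definition el :: "int \<Rightarrow> int \<Rightarrow> int \<Rightarrow> int \<Rightarrow> quat" where
  "el a b c d = Quat (of_int a + of_int (c+d)/2) (of_int b + of_int (c+d)/2)
      (of_int c * sqrt 2 / 2) (of_int d * sqrt 2 / 2)"

lemma s2: "sqrt 2 * sqrt 2 = (2::real)" by simp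

lemma H_el: "H122 = {el a b c d | a b c d. True}"
  unfolding H122_def
  by (simp add: el_def qadd_def qscale_def v1_def v2_def v3_def v4_def algebra_simps add_divide_distrib)

lemma el_mul: "qmul (el a b c d) (el p q r s) = el
  (a*p - b*q - b*r - c*r - d*q - d*r - d*s)
  (a*q + b*p + b*s + c*q + c*s - d*r)
  (a*r - b*s + c*p + c*r + d*q + d*r)
  (a*s + b*r - c*q + d*p + d*r + d*s)"
  unfolding qmul_def el_def
  unfolding qmul_def el_def quat.inject using s2
    by (simp only: quat.sel of_int_add of_int_diff of_int_mult) (simp add: field_simps)

lemma el_sub: "qsub (el a b c d) (el p q r s) = el (a-p) (b-q) (c-r) (d-s)"
  unfolding qsub_def el_def by (simp add: algebra_simps diff_divide_distrib)

lemma el_scale: "qscale 2 (el a b c d) = el (2*a) (2*b) (2*c) (2*d)"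
  unfolding qscale_def el_def by (simp add: algebra_simps)

lemma el_one: "qone = el 1 0 0 0" unfolding qone_def el_def by simp

lemma el_norm: "qnorm (el a b c d) = of_int (a*a+b*b+(c+d)*(a+b)+c*c+d*d+c*d)"
  unfolding qnorm_def qmul_def qconj_def el_def
  unfolding qnorm_def qmul_def qconj_def el_def quat.sel using s2
    apply (simp only: of_int_add of_int_diff of_int_mult)
    by (simp add: field_simps)

lemma el_H: "el a b c d \<in> H122" by (auto simp: H_el)

lemma cong_el:
  assumes "odd x" "even y" "even z" "even w"
  shows "cong2_H122 (el x y z w) qone"
proof -
  obtain k where k: "x - 1 = 2*k" using assms(1) by (metis odd_two_times_div_two_succ add_diff_cancel_right')
  obtain y' where y: "y = 2*y'" using assms(2) by blast
  obtain z' where z: "z = 2*z'" using assms(3) by blast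
  obtain w' where w: "w = 2*w'" using assms(4) by blast
  show ?thesis unfolding cong2_H122_def
    by (rule bexI[of _ "el k y' z' w'"]) (simp_all add: el_one el_sub el_scale k y z w el_H)
qed

definition UL :: "(int*int*int*int) list" where
  "UL = [(-1, 0, 0, 1), (-1, 0, 1, 0), (0, 0, -1, 1), (0, -1, 0, 0), (-1, -1, 0, 1),
     (-1, -1, 1, 0), (-1, 0, 0, 0), (0, 0, 0, -1), (0, 0, -1, 0), (0, -1, 0, 1),
     (0, -1, 1, 0), (-1, -1, 1, 1)]"

lemma UL_unit: "(p,q,r,s) \<in> set UL \<Longrightarrow> is_unit_H122 (el p q r s)"
  unfolding is_unit_H122_def
  by (auto simp: UL_def el_H el_mul el_one intro!: bexI[of _ "el (p+r+s) (-q) (-r) (-s)"])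

lemma main_el:
  assumes "odd (a*a+b*b+(c+d)*(a+b)+c*c+d*d+c*d)"
  shows "\<exists>(p,q,r,s)\<in>set UL.
    odd (a*p - b*q - b*r - c*r - d*q - d*r - d*s) \<and>
    even (a*q + b*p + b*s + c*q + c*s - d*r) \<and>
    even (a*r - b*s + c*p + c*r + d*q + d*r) \<and>
    even (a*s + b*r - c*q + d*p + d*r + d*s) \<and>
    odd (p*a - q*b - q*c - r*c - s*b - s*c - s*d) \<and>
    even (p*b + q*a + q*d + r*b + r*d - s*c) \<and>
    even (p*c - q*d + r*a + r*c + s*b + s*c) \<and>
    even (p*d + q*c - r*b + s*a + s*c + s*d)"
  using assms unfolding UL_def
  by (simp add: even_add even_mult_iff even_diff) (cases "even a"; cases "even b"; cases "even c"; cases "even d"; simp)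

theorem corollary9:
  assumes "b \<in> H122"
    and "\<exists>n::int. odd n \<and> qnorm b = of_int n"
  shows "\<exists>u u1. is_unit_H122 u \<and> is_unit_H122 u1 \<and>
           cong2_H122 (qmul b u) qone \<and> cong2_H122 (qmul u1 b) qone"
proof -
  obtain x y z w where b: "b = el x y z w" using assms(1) by (auto simp: H_el)
  obtain n :: int where n: "odd n" "qnorm b = of_int n" using assms(2) by blast
  have "n = x*x+y*y+(z+w)*(x+y)+z*z+w*w+z*w"
    using n(2) unfolding b el_norm of_int_eq_iff by simp
  with n(1) obtain p q r s where pq: "(p,q,r,s) \<in> set UL" and C:
    "odd (x*p - y*q - y*r - z*r - w*q - w*r - w*s)"
    "even (x*q + y*p + y*s + z*q + z*s - w*r)"
    "even (x*r - y*s + z*p + z*r + w*q + w*r)"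
    "even (x*s + y*r - z*q + w*p + w*r + w*s)"
    "odd (p*x - q*y - q*z - r*z - s*y - s*z - s*w)"
    "even (p*y + q*x + q*w + r*y + r*w - s*z)"
    "even (p*z - q*w + r*x + r*z + s*y + s*z)"
    "even (p*w + q*z - r*y + s*x + s*z + s*w)"
    using main_el[of x y z w] by blast
  show ?thesis
    apply (rule exI[of _ "el p q r s"], rule exI[of _ "el p q r s"])
    using UL_unit[OF pq] C by (simp add: b el_mul cong_el)
qed

end
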